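(* Let $(a_0,\ldots,a_n)$ be a finite sequence of positive integers and $\omega=[a_0,\ldots,a_n,1,1,1,\ldots]$. For every $\varepsilon>0$ there is $m_0>0$ such that for every integer $m\ge m_0$ and every infinite sequence of positive integers $I=(a_{n+m},a_{n+m+1},\ldots)$, writing $$\beta^I=[a_0,\ldots,a_n,\underbrace{1,\ldots,1}_{m-1},a_{n+m},a_{n+m+1},\ldots]$$ (digits $a_0,\ldots,a_n$ in positions $0,\ldots,n$, ones in positions $n+1,\ldots,n+m-1$, and $a_j$ in position $j\ge n+m$), we have $$\sum_{i\ge n+m}\alpha_0(\omega)\cdots\alpha_{i-1}(\omega)\log\frac{1}{\alpha_i(\omega)}<\varepsilon$$ and $$\sum_{i=0}^{n+m-1}\left|\alpha_0(\beta^I)\cdots\alpha_{i-1}(\beta^I)\log\frac{1}{\alpha_i(\beta^I)}-\alpha_0(\omega)\cdots\alpha_{i-1}(\omega)\log\frac{1}{\alpha_i(\omega)}\right|<\varepsilon.$$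
   Context: For positive integers $d_0,d_1,\ldots$, $[d_0,d_1,d_2,\ldots]$ denotes the continued fraction $\cfrac{1}{d_0+\cfrac{1}{d_1+\cfrac{1}{d_2+\cdots}}}$, and for $\beta=[d_0,d_1,\ldots]$ we write $\alpha_j(\beta)=[d_j,d_{j+1},\ldots]$. (An empty product equals $1$.) *)

theory Defs
  imports "HOL-Analysis.Analysis"
begin

fun cf_trunc :: "(nat \<Rightarrow> nat) \<Rightarrow> nat \<Rightarrow> real" where
  "cf_trunc d 0 = 0"
| "cf_trunc d (Suc N) = 1 / (real (d 0) + cf_trunc (\<lambda>k. d (Suc k)) N)"

definition cf :: "(nat \<Rightarrow> nat) \<Rightarrow> real" where
  "cf d = lim (\<lambda>N. cf_trunc d N)"

definition cf_alpha :: "nat \<Rightarrow> (nat \<Rightarrow> nat) \<Rightarrow> real" where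
  "cf_alpha j d = cf (\<lambda>k. d (j + k))"

definition cf_term :: "(nat \<Rightarrow> nat) \<Rightarrow> nat \<Rightarrow> real" where
  "cf_term d i = (\<Prod>j<i. cf_alpha j d) * ln (1 / cf_alpha i d)"

end

theory Submission
  imports Defs
begin


lemma pos_ge1: "\<forall>k. d k > 0 \<Longrightarrow> real (d j) \<ge> 1"
proof -
  assume "\<forall>k. d k > 0"
  then have "d j \<ge> 1" by (simp add: Suc_le_eq)
  then show ?thesis by simp
qed

lemma cf_trunc_bounds:
  "(\<forall>k. d k > 0) \<Longrightarrow> 0 \<le> cf_trunc d N \<and> cf_trunc d N \<le> 1"
proof (induction N arbitrary: d)
  case 0 then show ?case by simp
next
  case (Suc N)
  have "0 \<le> cf_trunc (\<lambda>k. d (Suc k)) N" using Suc.IH[of "\<lambda>k. d (Suc k)"] Suc.prems by auto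
  moreover have "real (d 0) \<ge> 1" using Suc.prems by (rule pos_ge1)
  ultimately show ?case by (simp add: divide_le_eq)
qed

lemma two_step:
  fixes a b X Y :: real
  assumes "a \<ge> 1" "b \<ge> 1" "X \<ge> 0" "Y \<ge> 0"
  shows "\<bar>1/(a+1/(b+X)) - 1/(a+1/(b+Y))\<bar> \<le> \<bar>X-Y\<bar>/4"
proof -
  have "a*(b+X) \<ge> 1*1" using assms by (intro mult_mono) auto
  then have p1: "a*(b+X)+1 \<ge> 2" by simp
  have "a*(b+Y) \<ge> 1*1" using assms by (intro mult_mono) auto
  then have p2: "a*(b+Y)+1 \<ge> 2" by simp
  have eq: "1/(a+1/(b+X)) - 1/(a+1/(b+Y)) = (X-Y)/((a*(b+X)+1)*(a*(b+Y)+1))"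
  proof -
    have r1: "1/(a+1/(b+X)) = (b+X)/(a*(b+X)+1)" using assms by (simp add: field_simps)
    have r2: "1/(a+1/(b+Y)) = (b+Y)/(a*(b+Y)+1)" using assms by (simp add: field_simps)
    have "(b+X)*(a*(b+Y)+1) - (b+Y)*(a*(b+X)+1) = X - Y" by (simp add: algebra_simps)
    then show ?thesis unfolding r1 r2 using p1 p2 by (simp add: diff_frac_eq)
  qed
  have "(a*(b+X)+1)*(a*(b+Y)+1) \<ge> 2*2" using p1 p2 by (intro mult_mono) auto
  then have "\<bar>X-Y\<bar>/((a*(b+X)+1)*(a*(b+Y)+1)) \<le> \<bar>X-Y\<bar>/4"
    by (intro divide_left_mono) auto
  then show ?thesis unfolding eq using p1 p2 by (simp add: abs_mult)
qed

lemma cf_trunc_aux: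
  "\<forall>d N M. (\<forall>k. d k > 0) \<longrightarrow> 2*L \<le> N \<longrightarrow> 2*L \<le> M \<longrightarrow>
     \<bar>cf_trunc d N - cf_trunc d M\<bar> \<le> (1/4)^L"
proof (induction L)
  case 0
  show ?case
  proof (intro allI impI)
    fix d N M assume "\<forall>k. (d::nat\<Rightarrow>nat) k > 0"
    then have "0 \<le> cf_trunc d N \<and> cf_trunc d N \<le> 1" "0 \<le> cf_trunc d M \<and> cf_trunc d M \<le> 1"
      using cf_trunc_bounds by blast+
    then show "\<bar>cf_trunc d N - cf_trunc d M\<bar> \<le> (1/4)^0" by auto
  qed
next
  case (Suc L)
  show ?case
  proof (intro allI impI)
    fix d N M assume pos: "\<forall>k. (d::nat\<Rightarrow>nat) k > 0" and N: "2 * Suc L \<le> N" and M: "2 * Suc L \<le> M"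
    define N' where "N' = N - 2"
    have N': "N = Suc (Suc N')" using N unfolding N'_def by simp
    define M' where "M' = M - 2"
    have M': "M = Suc (Suc M')" using M unfolding M'_def by simp
    define e where "e = (\<lambda>k. d (Suc (Suc k)))"
    have epos: "\<forall>k. e k > 0" using pos e_def by auto
    have NL: "2*L \<le> N'" "2*L \<le> M'" using N M unfolding N'_def M'_def by simp_all
    have IH: "\<bar>cf_trunc e N' - cf_trunc e M'\<bar> \<le> (1/4)^L"
      using Suc.IH epos NL by blast
    have b: "0 \<le> cf_trunc e N'" "0 \<le> cf_trunc e M'" using cf_trunc_bounds epos by blast+
    have a1: "real (d 0) \<ge> 1" "real (d (Suc 0)) \<ge> 1" using pos_ge1[OF pos, of 0] pos_ge1[OF pos, of "Suc 0"] by auto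
    have eN: "cf_trunc d N = 1/(real (d 0) + 1/(real (d (Suc 0)) + cf_trunc e N'))"
      unfolding N' e_def by (simp only: cf_trunc.simps One_nat_def)
    have eM: "cf_trunc d M = 1/(real (d 0) + 1/(real (d (Suc 0)) + cf_trunc e M'))"
      unfolding M' e_def by (simp only: cf_trunc.simps One_nat_def)
    have "\<bar>cf_trunc d N - cf_trunc d M\<bar> \<le> \<bar>cf_trunc e N' - cf_trunc e M'\<bar> / 4"
      unfolding eN eM by (rule two_step[OF a1 b])
    also have "\<dots> \<le> (1/4)^L / 4" using IH by simp
    finally show "\<bar>cf_trunc d N - cf_trunc d M\<bar> \<le> (1/4)^Suc L" by simp
  qed
qed

lemma cf_trunc_conv:
  assumes "\<forall>k. d k > 0" shows "(\<lambda>N. cf_trunc d N) \<longlonglongrightarrow> cf d"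
proof -
  have "Cauchy (\<lambda>N. cf_trunc d N)"
  proof (rule CauchyI)
    fix e :: real assume "e > 0"
    obtain L where L: "(1/4::real)^L < e" using real_arch_pow_inv[OF \<open>e>0\<close>, of "1/4"] by auto
    show "\<exists>M. \<forall>m\<ge>M. \<forall>n\<ge>M. norm (cf_trunc d m - cf_trunc d n) < e"
    proof (intro exI[of _ "2*L"] allI impI)
      fix m n :: nat assume mn: "2*L \<le> m" "2*L \<le> n"
      have "\<bar>cf_trunc d m - cf_trunc d n\<bar> \<le> (1/4)^L"
        using cf_trunc_aux[of L] assms mn by blast
      then show "norm (cf_trunc d m - cf_trunc d n) < e" using L by simp
    qed
  qed
  then have "convergent (\<lambda>N. cf_trunc d N)" using Cauchy_convergent_iff by blast
  then show ?thesis unfolding cf_def convergent_LIMSEQ_iff .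
qed

lemma cf_shift_bounds:
  assumes "\<forall>k. d k > 0" shows "0 \<le> cf d \<and> cf d \<le> 1"
proof
  show "0 \<le> cf d"
    by (rule LIMSEQ_le_const[OF cf_trunc_conv[OF assms]]) (use cf_trunc_bounds[OF assms] in blast)
  show "cf d \<le> 1"
    by (rule LIMSEQ_le_const2[OF cf_trunc_conv[OF assms]]) (use cf_trunc_bounds[OF assms] in blast)
qed

lemma cf_rec:
  assumes pos: "\<forall>k. d k > 0" shows "cf d = 1 / (real (d 0) + cf (\<lambda>k. d (Suc k)))"
proof -
  have p2: "\<forall>k. d (Suc k) > 0" using pos by auto
  have l1: "(\<lambda>N. cf_trunc d (Suc N)) \<longlonglongrightarrow> cf d"
    using LIMSEQ_Suc[OF cf_trunc_conv[OF pos]] .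
  have d0: "real (d 0) \<ge> 1" using pos by (rule pos_ge1)
  have "(\<lambda>N. 1 / (real (d 0) + cf_trunc (\<lambda>k. d (Suc k)) N)) \<longlonglongrightarrow> 1 / (real (d 0) + cf (\<lambda>k. d (Suc k)))"
    using cf_trunc_conv[OF p2] cf_shift_bounds[OF p2] d0 by (intro tendsto_intros) auto
  then have "(\<lambda>N. cf_trunc d (Suc N)) \<longlonglongrightarrow> 1 / (real (d 0) + cf (\<lambda>k. d (Suc k)))" by simp
  then show ?thesis using LIMSEQ_unique[OF l1] by simp
qed

lemma alpha_rec:
  assumes pos: "\<forall>k. d k > 0"
  shows "cf_alpha j d = 1 / (real (d j) + cf_alpha (Suc j) d)"
  using cf_rec[of "\<lambda>k. d (j + k)"] pos unfolding cf_alpha_def by simp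

lemma alpha_bounds:
  assumes pos: "\<forall>k. d k > 0"
  shows "1 / (real (d j) + 1) \<le> cf_alpha j d \<and> cf_alpha j d \<le> 1 \<and> 0 < cf_alpha j d"
proof -
  have b: "0 \<le> cf_alpha (Suc j) d \<and> cf_alpha (Suc j) d \<le> 1"
    using cf_shift_bounds[of "\<lambda>k. d (Suc j + k)"] pos unfolding cf_alpha_def by auto
  have d0: "real (d j) \<ge> 1" using pos by (rule pos_ge1)
  show ?thesis unfolding alpha_rec[OF pos, of j] using b d0
    by (auto simp: frac_le divide_le_eq)
qed

lemma alpha_23:
  assumes pos: "\<forall>k. d k > 0" and "d j = 1" "d (Suc j) = 1"
  shows "cf_alpha j d \<le> 2/3"
proof -
  have "1/2 \<le> cf_alpha (Suc j) d" using alpha_bounds[OF pos, of "Suc j"] assms by simp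
  then show ?thesis unfolding alpha_rec[OF pos, of j] using assms by (simp add: divide_le_eq)
qed



lemma alpha_nonneg: "\<forall>k. d k > 0 \<Longrightarrow> 0 \<le> cf_alpha j d"
  using alpha_bounds[of d j] by simp

lemma alpha_le1: "\<forall>k. d k > 0 \<Longrightarrow> cf_alpha j d \<le> 1"
  using alpha_bounds[of d j] by simp

lemma alpha_diff:
  assumes dpos: "\<forall>k. d k > 0" and epos: "\<forall>k. e k > 0"
  shows "\<forall>j. j + t = N \<longrightarrow> (\<forall>k. j \<le> k \<longrightarrow> k < N \<longrightarrow> d k = e k)
    \<longrightarrow> (\<forall>k. c \<le> k \<longrightarrow> k < N \<longrightarrow> cf_alpha k e \<le> 2/3)
    \<longrightarrow> \<bar>cf_alpha j d - cf_alpha j e\<bar> \<le> (2/3)^(N - max j c)"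
proof (induction t)
  case 0
  show ?case
  proof (intro allI impI)
    fix j assume "j + 0 = N"
    have "0 < cf_alpha j d \<and> cf_alpha j d \<le> 1" "0 < cf_alpha j e \<and> cf_alpha j e \<le> 1"
      using alpha_bounds dpos epos by blast+
    then have "\<bar>cf_alpha j d - cf_alpha j e\<bar> \<le> 1" by auto
    also have "1 \<le> (2/3::real)^(N - max j c)" using \<open>j + 0 = N\<close> by simp
    finally show "\<bar>cf_alpha j d - cf_alpha j e\<bar> \<le> (2/3)^(N - max j c)" .
  qed
next
  case (Suc t)
  show ?case
  proof (intro allI impI)
    fix j assume jt: "j + Suc t = N" and agree: "\<forall>k. j \<le> k \<longrightarrow> k < N \<longrightarrow> d k = e k"
      and small: "\<forall>k. c \<le> k \<longrightarrow> k < N \<longrightarrow> cf_alpha k e \<le> 2/3"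
    have IH: "\<bar>cf_alpha (Suc j) d - cf_alpha (Suc j) e\<bar> \<le> (2/3)^(N - max (Suc j) c)"
      using Suc.IH jt agree small by auto
    define x where "x = cf_alpha (Suc j) d"
    define y where "y = cf_alpha (Suc j) e"
    have dj: "d j = e j" using agree jt by auto
    have bx: "0 \<le> x" "0 \<le> y" using alpha_bounds dpos epos x_def y_def by (metis less_imp_le)+
    have ge: "real (e j) \<ge> 1" using epos by (rule pos_ge1)
    have ad: "cf_alpha j d = 1/(real (e j) + x)" using alpha_rec[OF dpos, of j] dj x_def by simp
    have ae: "cf_alpha j e = 1/(real (e j) + y)" using alpha_rec[OF epos, of j] y_def by simp
    have "cf_alpha j d - cf_alpha j e = (y - x) * cf_alpha j d * cf_alpha j e"
      unfolding ad ae using bx ge by (simp add: field_simps)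
    then have "\<bar>cf_alpha j d - cf_alpha j e\<bar> = \<bar>x - y\<bar> * cf_alpha j d * cf_alpha j e"
      using alpha_bounds[OF dpos, of j] alpha_bounds[OF epos, of j] by (simp add: abs_mult)
    also have "\<dots> \<le> \<bar>x - y\<bar> * 1 * cf_alpha j e"
      using alpha_bounds[OF dpos, of j] alpha_bounds[OF epos, of j]
      by (intro mult_right_mono mult_left_mono) auto
    finally have main: "\<bar>cf_alpha j d - cf_alpha j e\<bar> \<le> \<bar>x - y\<bar> * cf_alpha j e" by simp
    show "\<bar>cf_alpha j d - cf_alpha j e\<bar> \<le> (2/3)^(N - max j c)"
    proof (cases "c \<le> j")
      case True
      then have "cf_alpha j e \<le> 2/3" using small jt by auto
      have "\<bar>x - y\<bar> * cf_alpha j e \<le> (2/3)^(N - max (Suc j) c) * (2/3)"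
        using IH x_def y_def \<open>cf_alpha j e \<le> 2/3\<close> alpha_bounds[OF epos, of j]
        by (intro mult_mono) auto
      also have "\<dots> = (2/3)^(N - max j c)"
      proof -
        have e1: "max (Suc j) c = Suc j" "max j c = j" using True by auto
        have "N - j = Suc (N - Suc j)" using jt by simp
        then show ?thesis by (simp add: e1 mult.commute)
      qed
      finally show ?thesis using main by linarith
    next
      case False
      have "\<bar>x - y\<bar> * cf_alpha j e \<le> (2/3)^(N - max (Suc j) c) * 1"
        using IH x_def y_def alpha_bounds[OF epos, of j]
        by (intro mult_mono) auto
      also have "\<dots> = (2/3)^(N - max j c)"
        using False by (simp add: max_def)
      finally show ?thesis using main by linarith
    qed
  qed
qed

lemma prod_alpha_le:
  assumes pos: "\<forall>k. d k > 0" and "n0 \<le> i"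
    and sm: "\<forall>j. n0 \<le> j \<longrightarrow> j < i \<longrightarrow> cf_alpha j d \<le> 2/3"
  shows "(\<Prod>j<i. cf_alpha j d) \<le> (2/3)^(i - n0)"
  using assms(2) sm
proof (induction i rule: dec_induct)
  case base
  have "(\<Prod>j<n0. cf_alpha j d) \<le> 1"
    using alpha_bounds[OF pos] by (intro prod_le_1) (auto intro: less_imp_le)
  then show ?case by simp
next
  case (step i)
  have "(\<Prod>j<Suc i. cf_alpha j d) = (\<Prod>j<i. cf_alpha j d) * cf_alpha i d" by simp
  also have "\<dots> \<le> (2/3)^(i - n0) * (2/3)"
    using step alpha_bounds[OF pos] by (intro mult_mono prod_nonneg) (auto intro: less_imp_le)
  also have "\<dots> = (2/3)^(Suc i - n0)" using step(1) by (simp add: Suc_diff_le)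
  finally show ?case .
qed

lemma prod_diff_le:
  fixes x y :: "nat \<Rightarrow> real"
  shows "(\<forall>j<i. 0 \<le> x j \<and> x j \<le> 1 \<and> 0 \<le> y j \<and> y j \<le> 1) \<Longrightarrow>
    \<bar>(\<Prod>j<i. x j) - (\<Prod>j<i. y j)\<bar> \<le> (\<Sum>j<i. \<bar>x j - y j\<bar>)"
proof (induction i)
  case 0 then show ?case by simp
next
  case (Suc i)
  define X where "X = (\<Prod>j<i. x j)"
  define Y where "Y = (\<Prod>j<i. y j)"
  have Y01: "0 \<le> Y" "Y \<le> 1" unfolding Y_def using Suc.prems
    by (auto intro!: prod_nonneg prod_le_1)
  have IH: "\<bar>X - Y\<bar> \<le> (\<Sum>j<i. \<bar>x j - y j\<bar>)" using Suc X_def Y_def by auto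
  have xi: "0 \<le> x i" "x i \<le> 1" using Suc.prems by auto
  have "X * x i - Y * y i = (X - Y) * x i + Y * (x i - y i)" by (simp add: algebra_simps)
  then have "\<bar>X * x i - Y * y i\<bar> = \<bar>(X - Y) * x i + Y * (x i - y i)\<bar>" by simp
  also have "\<dots> \<le> \<bar>(X - Y) * x i\<bar> + \<bar>Y * (x i - y i)\<bar>" by (rule abs_triangle_ineq)
  also have "\<dots> = \<bar>X - Y\<bar> * x i + Y * \<bar>x i - y i\<bar>" using xi Y01 by (simp add: abs_mult)
  also have "\<dots> \<le> \<bar>X - Y\<bar> * 1 + 1 * \<bar>x i - y i\<bar>"
    using xi Y01 by (intro add_mono mult_mono) auto
  finally have "\<bar>X * x i - Y * y i\<bar> \<le> \<bar>X - Y\<bar> + \<bar>x i - y i\<bar>" by simp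
  then have "\<bar>X * x i - Y * y i\<bar> \<le> (\<Sum>j<i. \<bar>x j - y j\<bar>) + \<bar>x i - y i\<bar>" using IH by linarith
  then show ?case by (simp add: X_def Y_def)
qed

lemma ln_diff_le:
  fixes c x y :: real
  assumes "0 < c" "c \<le> x" "c \<le> y"
  shows "\<bar>ln x - ln y\<bar> \<le> \<bar>x - y\<bar> / c"
proof -
  have g: "ln u - ln v \<le> \<bar>u - v\<bar> / c" if "c \<le> u" "c \<le> v" for u v
  proof -
    have "ln u - ln v = ln (u / v)" using that assms by (simp add: ln_div)
    also have "\<dots> \<le> u / v - 1" using that assms by (intro ln_le_minus_one) auto
    also have "\<dots> = (u - v) / v" using that assms by (simp add: field_simps)
    also have "\<dots> \<le> \<bar>u - v\<bar> / v" using that assms by (intro divide_right_mono) auto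
    also have "\<dots> \<le> \<bar>u - v\<bar> / c" using that assms by (intro divide_left_mono) auto
    finally show ?thesis .
  qed
  show ?thesis using g[of x y] g[of y x] assms by (auto simp: abs_minus_commute)
qed

lemma term_diff:
  fixes Pd Pe xd xe c u \<delta> :: real
  assumes "0 \<le> Pe" "Pe \<le> 1" "0 < c" "c \<le> xd" "xd \<le> 1" "c \<le> xe"
    and "\<bar>Pd - Pe\<bar> \<le> u" "\<bar>xd - xe\<bar> \<le> \<delta>"
  shows "\<bar>Pd * ln (1/xd) - Pe * ln (1/xe)\<bar> \<le> u / c + \<delta> / c"
proof -
  have xd0: "xd > 0" "xe > 0" using assms by auto
  have L: "0 \<le> -ln xd" using assms xd0 by simp
  have L2: "-ln xd \<le> 1 / c"
  proof -
    have "-ln xd = ln (1/xd)" using xd0 by (simp add: ln_div)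
    also have "\<dots> \<le> 1/xd - 1" using xd0 by (intro ln_le_minus_one) auto
    also have "\<dots> \<le> 1/c"
    proof -
      have "1/xd \<le> 1/c" using assms by (intro divide_left_mono) auto
      then show ?thesis by linarith
    qed
    finally show ?thesis .
  qed
  have lnd: "\<bar>ln xd - ln xe\<bar> \<le> \<delta> / c"
  proof -
    have "\<bar>xd - xe\<bar> / c \<le> \<delta> / c" using assms by (intro divide_right_mono) auto
    then show ?thesis using ln_diff_le[of c xd xe] assms by linarith
  qed
  have eq: "Pd * ln (1/xd) - Pe * ln (1/xe) = (Pd - Pe) * (-ln xd) + Pe * (ln xe - ln xd)"
    using xd0 by (simp add: ln_div algebra_simps)
  have u0: "0 \<le> u" using assms(7) by linarith
  have "\<bar>(Pd - Pe) * (-ln xd)\<bar> = \<bar>Pd - Pe\<bar> * (-ln xd)"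
    by (simp only: abs_mult abs_of_nonneg[OF L])
  also have "\<dots> \<le> u * (1/c)"
    using L L2 assms(7) u0 by (intro mult_mono) auto
  finally have f1: "\<bar>(Pd - Pe) * (-ln xd)\<bar> \<le> u * (1/c)" .
  have "\<bar>Pe * (ln xe - ln xd)\<bar> = Pe * \<bar>ln xd - ln xe\<bar>"
    using assms(1) by (simp add: abs_mult abs_minus_commute)
  also have "\<dots> \<le> 1 * (\<delta>/c)"
    using lnd assms(1,2) by (intro mult_mono) auto
  finally have f2: "\<bar>Pe * (ln xe - ln xd)\<bar> \<le> 1 * (\<delta>/c)" .
  show ?thesis unfolding eq using f1 f2
    using abs_triangle_ineq[of "(Pd - Pe) * (-ln xd)" "Pe * (ln xe - ln xd)"] by simp
qed

lemma geo_sum: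
  fixes r :: real
  assumes "c \<le> K" "K \<le> N"
  shows "(\<Sum>i\<in>{K..<N}. (2/3::real)^(i - c)) = 3 * ((2/3)^(K - c) - (2/3)^(N - c))"
  using assms(2)
proof (induction N rule: dec_induct)
  case base then show ?case by simp
next
  case (step N)
  have "(2/3::real)^(Suc N - c) = (2/3)^(N - c) * (2/3)" using step(1) assms(1)
    by (simp add: Suc_diff_le)
  then show ?case using step by simp
qed

lemma term_abs_le:
  assumes pos: "\<forall>k. d k > 0" and "d i = 1" and "(\<Prod>j<i. cf_alpha j d) \<le> B"
  shows "\<bar>cf_term d i\<bar> \<le> B"
proof -
  have a: "1/2 \<le> cf_alpha i d" "cf_alpha i d \<le> 1" using alpha_bounds[OF pos, of i] assms by auto
  have l0: "0 \<le> ln (1 / cf_alpha i d)" using a by simp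
  have l1: "ln (1 / cf_alpha i d) \<le> 1"
  proof -
    have "ln (1 / cf_alpha i d) \<le> 1 / cf_alpha i d - 1" using a by (intro ln_le_minus_one) auto
    also have "\<dots> \<le> 1" using a by (simp add: divide_le_eq)
    finally show ?thesis .
  qed
  have p0: "0 \<le> (\<Prod>j<i. cf_alpha j d)" by (intro prod_nonneg) (simp add: alpha_nonneg[OF pos])
  have "\<bar>cf_term d i\<bar> = (\<Prod>j<i. cf_alpha j d) * ln (1 / cf_alpha i d)"
    unfolding cf_term_def using l0 p0 by (simp add: abs_mult)
  also have "\<dots> \<le> B * 1" using l0 l1 p0 assms by (intro mult_mono) auto
  finally show ?thesis by simp
qed



theorem mainTheorem11:
  fixes a :: "nat \<Rightarrow> nat" and n :: nat and \<epsilon> :: real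
  assumes apos: "\<forall>i\<le>n. a i > 0"
    and eps: "\<epsilon> > 0"
  shows "\<exists>m0::nat. m0 > 0 \<and>
    (\<forall>m \<ge> m0. \<forall>I :: nat \<Rightarrow> nat. (\<forall>j. I j > 0) \<longrightarrow>
      (let \<omega> = (\<lambda>i. if i \<le> n then a i else 1);
           \<beta> = (\<lambda>i. if i \<le> n then a i else if i < n + m then 1 else I (i - (n + m)))
       in summable (\<lambda>k. cf_term \<omega> (n + m + k))
          \<and> (\<Sum>k. cf_term \<omega> (n + m + k)) < \<epsilon>
          \<and> (\<Sum>i<n + m. \<bar>cf_term \<beta> i - cf_term \<omega> i\<bar>) < \<epsilon>))"
proof -
  define A :: real where "A = real (\<Sum>i\<le>n. a i)"
  have aA: "real (a i) \<le> A" if "i \<le> n" for i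
  proof -
    have "a i \<le> (\<Sum>i\<le>n. a i)" using that by (intro member_le_sum) auto
    then show ?thesis unfolding A_def by linarith
  qed
  have A1: "1 \<le> A"
  proof -
    have "a 0 \<ge> 1" using apos by (simp add: Suc_le_eq)
    then have "real (a 0) \<ge> 1" by simp
    then show ?thesis using aA[of 0] by linarith
  qed
  have r23: "(2/3::real) < 1" by simp
  obtain k1 where k1: "(2/3::real)^k1 < \<epsilon>/12" using real_arch_pow_inv[OF _ r23, of "\<epsilon>/12"] eps by auto
  define K where "K = n + 1 + k1"
  have Kpos: "(A+1)*K*K > 0" using A1 by (simp add: K_def)
  obtain k2 where k2: "(2/3::real)^k2 < \<epsilon>/(2*((A+1)*K*K))"
    using real_arch_pow_inv[OF _ r23, of "\<epsilon>/(2*((A+1)*K*K))"] eps Kpos by auto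
  obtain k3 where k3: "(2/3::real)^k3 < \<epsilon>/3" using real_arch_pow_inv[OF _ r23, of "\<epsilon>/3"] eps by auto
  have rmono: "(2/3::real)^q \<le> (2/3)^p" if "p \<le> q" for p q
    using that by (intro power_decreasing) auto
  show ?thesis
  proof (rule exI[of _ "K+k2+k3+1"], intro conjI allI impI)
    show "K+k2+k3+1 > 0" by simp
    fix m :: nat and I :: "nat \<Rightarrow> nat"
    assume m: "K+k2+k3+1 \<le> m" and Ipos: "\<forall>j. I j > 0"
    define N where "N = n + m"
    define \<omega> :: "nat \<Rightarrow> nat" where "\<omega> = (\<lambda>i. if i \<le> n then a i else 1)"
    define \<beta> :: "nat \<Rightarrow> nat" where "\<beta> = (\<lambda>i. if i \<le> n then a i else if i < n + m then 1 else I (i - (n + m)))"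
    have \<omega>pos: "\<forall>k. \<omega> k > 0" using apos by (simp add: \<omega>_def)
    have \<beta>pos: "\<forall>k. \<beta> k > 0" using apos Ipos by (simp add: \<beta>_def)
    have agree: "\<beta> k = \<omega> k" if "k < N" for k using that by (simp add: \<beta>_def \<omega>_def N_def)
    have \<omega>23: "cf_alpha k \<omega> \<le> 2/3" if "n+1 \<le> k" for k
      using that by (intro alpha_23[OF \<omega>pos]) (auto simp: \<omega>_def)
    have \<beta>23: "cf_alpha k \<beta> \<le> 2/3" if "n+1 \<le> k" "k + 1 < N" for k
      using that by (intro alpha_23[OF \<beta>pos]) (auto simp: \<beta>_def N_def)
    have KN: "K \<le> N" "k2 \<le> N - K" "k3 \<le> N - (n+1)" "n < N" "n + 1 \<le> K" "K - (n+1) = k1"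
      using m by (simp_all add: N_def K_def)
    have digA: "real (\<omega> k) \<le> A" for k using aA A1 by (simp add: \<omega>_def)
    have lowb: "1/(A+1) \<le> cf_alpha k \<beta> \<and> 1/(A+1) \<le> cf_alpha k \<omega>" if "k < N" for k
    proof -
      have "1/(A+1) \<le> 1/(real (\<omega> k) + 1)" using digA[of k] \<omega>pos by (intro divide_left_mono) auto
      then show ?thesis using alpha_bounds[OF \<omega>pos, of k] alpha_bounds[OF \<beta>pos, of k] agree[OF that]
        by auto
    qed
    have delta: "\<bar>cf_alpha j \<beta> - cf_alpha j \<omega>\<bar> \<le> (2/3)^(N-K)" if "j \<le> K" for j
    proof -
      have "\<bar>cf_alpha j \<beta> - cf_alpha j \<omega>\<bar> \<le> (2/3)^(N - max j (n+1))"
        using alpha_diff[OF \<beta>pos \<omega>pos, of "N - j" N "n+1", rule_format, of j] that KN agree \<omega>23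
        by auto
      also have "\<dots> \<le> (2/3)^(N-K)" using that KN by (intro rmono) auto
      finally show ?thesis .
    qed
    have t1b: "\<bar>cf_term \<omega> (N + k)\<bar> \<le> (2/3)^(N - (n+1)) * (2/3)^k" for k
    proof -
      have "(\<Prod>j<N+k. cf_alpha j \<omega>) \<le> (2/3)^(N + k - (n+1))"
        using KN \<omega>23 by (intro prod_alpha_le[OF \<omega>pos]) auto
      also have "(2/3::real)^(N+k-(n+1)) = (2/3)^(N-(n+1)) * (2/3)^k"
        using KN by (simp add: power_add[symmetric])
      finally show ?thesis using KN by (intro term_abs_le[OF \<omega>pos]) (auto simp: \<omega>_def)
    qed
    have sg: "summable (\<lambda>k. (2/3::real)^(N - (n+1)) * (2/3)^k)"
      by (intro summable_mult summable_geometric) simp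
    have S1: "summable (\<lambda>k. cf_term \<omega> (N + k))"
      by (rule summable_comparison_test'[OF sg]) (use t1b in auto)
    have "(\<Sum>k. cf_term \<omega> (N + k)) \<le> (\<Sum>k. (2/3::real)^(N - (n+1)) * (2/3)^k)"
      using t1b by (intro suminf_le S1 sg) (meson abs_le_D1)
    also have "\<dots> = (2/3)^(N - (n+1)) * 3"
      by (subst suminf_mult) (auto simp: suminf_geometric)
    also have "\<dots> \<le> (2/3)^k3 * 3" using KN by (intro mult_right_mono rmono) auto
    also have "\<dots> < \<epsilon>" using k3 by simp
    finally have P1: "(\<Sum>k. cf_term \<omega> (N + k)) < \<epsilon>" .
    define D where "D = (\<lambda>i. \<bar>cf_term \<beta> i - cf_term \<omega> i\<bar>)"
    have split: "(\<Sum>i<N. D i) = (\<Sum>i<K. D i) + (\<Sum>i\<in>{K..<N}. D i)"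
      using sum.atLeastLessThan_concat[of 0 K N D] KN by (simp add: atLeast0LessThan)
    have head: "D i \<le> (A+1) * K * (2/3)^(N-K)" if "i < K" for i
    proof -
      define \<delta> :: real where "\<delta> = (2/3)^(N-K)"
      have c0: "0 < 1/(A+1)" using A1 by simp
      have iN: "i < N" using that KN by simp
      have Pe: "0 \<le> (\<Prod>j<i. cf_alpha j \<omega>)" "(\<Prod>j<i. cf_alpha j \<omega>) \<le> 1"
        by (auto intro!: prod_nonneg prod_le_1 simp: alpha_nonneg[OF \<omega>pos] alpha_le1[OF \<omega>pos])
      have "\<bar>(\<Prod>j<i. cf_alpha j \<beta>) - (\<Prod>j<i. cf_alpha j \<omega>)\<bar> \<le> (\<Sum>j<i. \<bar>cf_alpha j \<beta> - cf_alpha j \<omega>\<bar>)"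
        using alpha_bounds[OF \<omega>pos] alpha_bounds[OF \<beta>pos] by (intro prod_diff_le) (auto intro: less_imp_le)
      also have "\<dots> \<le> real (card {..<i}) * \<delta>"
        using delta that unfolding \<delta>_def by (intro sum_bounded_above) auto
      finally have u: "\<bar>(\<Prod>j<i. cf_alpha j \<beta>) - (\<Prod>j<i. cf_alpha j \<omega>)\<bar> \<le> real i * \<delta>" by simp
      have "D i \<le> real i * \<delta> / (1/(A+1)) + \<delta> / (1/(A+1))"
        unfolding D_def cf_term_def
        using term_diff[OF Pe c0 _ _ _ u, of "cf_alpha i \<beta>" "cf_alpha i \<omega>" \<delta>]
          lowb[OF iN] alpha_bounds[OF \<beta>pos, of i] delta[of i] that \<delta>_def by auto
      also have "\<dots> = (A+1) * ((real i + 1) * \<delta>)" by (simp add: algebra_simps)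
      also have "\<dots> \<le> (A+1) * (K * \<delta>)"
        using that A1 unfolding \<delta>_def by (intro mult_left_mono mult_right_mono) auto
      finally show ?thesis by (simp add: \<delta>_def mult.assoc)
    qed
    have H: "(\<Sum>i<K. D i) < \<epsilon>/2"
    proof -
      have "(\<Sum>i<K. D i) \<le> real (card {..<K}) * ((A+1) * K * (2/3)^(N-K))"
        using head by (intro sum_bounded_above) auto
      also have "\<dots> = ((A+1)*K*K) * (2/3)^(N-K)" by (simp add: algebra_simps)
      also have "\<dots> \<le> ((A+1)*K*K) * (2/3)^k2"
        using KN Kpos by (intro mult_left_mono rmono) auto
      also have "\<dots> < ((A+1)*K*K) * (\<epsilon>/(2*((A+1)*K*K)))"
        using k2 Kpos by (intro mult_strict_left_mono) auto
      also have "\<dots> = \<epsilon>/2" using Kpos by (simp add: field_simps)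
      finally show ?thesis .
    qed
    have tailb: "D i \<le> 2 * (2/3)^(i - (n+1))" if "K \<le> i" "i < N" for i
    proof -
      have b1: "\<bar>cf_term \<beta> i\<bar> \<le> (2/3)^(i - (n+1))"
        using that KN \<beta>23
        by (intro term_abs_le[OF \<beta>pos] prod_alpha_le[OF \<beta>pos]) (auto simp: \<beta>_def N_def)
      have b2: "\<bar>cf_term \<omega> i\<bar> \<le> (2/3)^(i - (n+1))"
        using that KN \<omega>23
        by (intro term_abs_le[OF \<omega>pos] prod_alpha_le[OF \<omega>pos]) (auto simp: \<omega>_def)
      show ?thesis unfolding D_def using b1 b2 by linarith
    qed
    have T: "(\<Sum>i\<in>{K..<N}. D i) < \<epsilon>/2"
    proof -
      have "(\<Sum>i\<in>{K..<N}. D i) \<le> (\<Sum>i\<in>{K..<N}. 2 * (2/3::real)^(i - (n+1)))"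
        using tailb by (intro sum_mono) auto
      also have "\<dots> = 2 * (3 * ((2/3)^(K - (n+1)) - (2/3)^(N - (n+1))))"
        using geo_sum[of "n+1" K N] KN by (simp add: sum_distrib_left[symmetric])
      also have "\<dots> \<le> 6 * (2/3)^k1" using KN by simp
      also have "\<dots> < \<epsilon>/2" using k1 by simp
      finally show ?thesis .
    qed
    have P2: "(\<Sum>i<N. D i) < \<epsilon>" using split H T by linarith
    have "summable (\<lambda>k. cf_term \<omega> (N + k)) \<and> (\<Sum>k. cf_term \<omega> (N + k)) < \<epsilon>
          \<and> (\<Sum>i<N. \<bar>cf_term \<beta> i - cf_term \<omega> i\<bar>) < \<epsilon>"
      using S1 P1 P2 unfolding D_def by blast
    then show "let \<omega> = (\<lambda>i. if i \<le> n then a i else 1);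
           \<beta> = (\<lambda>i. if i \<le> n then a i else if i < n + m then 1 else I (i - (n + m)))
       in summable (\<lambda>k. cf_term \<omega> (n + m + k))
          \<and> (\<Sum>k. cf_term \<omega> (n + m + k)) < \<epsilon>
          \<and> (\<Sum>i<n + m. \<bar>cf_term \<beta> i - cf_term \<omega> i\<bar>) < \<epsilon>"
      unfolding Let_def \<omega>_def \<beta>_def N_def .
  qed
qed

end
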